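(* Let $G$ be a connected graph, and let $P$ be an ear of $G$ containing at least five vertices. Let $H$ be the subgraph of $G$ induced by removing the internal vertices of $P$. If $\overline{H}$ has an orthogonal vector representation in $\mathbb{R}^3$ consisting of pairwise linearly independent vectors, then so does $\overline{G}$.
   Context: All graphs are finite and simple; $\overline{G}$ denotes the complement of $G$. An ear of a graph $G$ is a maximal path subgraph of $G$ whose internal vertices each have degree 2 in $G$. An orthogonal vector representation of a graph $G=(V,E)$ in $\mathbb{R}^d$ is a map $\phi:V\to\mathbb{R}^d$ with $\phi(v)\neq 0$ for all $v$, and for distinct $u,v$: $\langle\phi(u),\phi(v)\rangle=0$ if and only if $uv\notin E$. *)

theory Defs
  imports "HOL-Analysis.Analysis"
begin

definition simple_graph :: "'a set \<Rightarrow> ('a \<Rightarrow> 'a \<Rightarrow> bool) \<Rightarrow> bool" where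
  "simple_graph V E \<longleftrightarrow> finite V \<and> (\<forall>u v. E u v \<longrightarrow> u \<in> V \<and> v \<in> V)
     \<and> (\<forall>u v. E u v \<longrightarrow> E v u) \<and> (\<forall>v. \<not> E v v)"

definition connected_graph :: "'a set \<Rightarrow> ('a \<Rightarrow> 'a \<Rightarrow> bool) \<Rightarrow> bool" where
  "connected_graph V E \<longleftrightarrow> V \<noteq> {} \<and> (\<forall>u\<in>V. \<forall>v\<in>V. E\<^sup>*\<^sup>* u v)"

definition degree :: "'a set \<Rightarrow> ('a \<Rightarrow> 'a \<Rightarrow> bool) \<Rightarrow> 'a \<Rightarrow> nat" where
  "degree V E v = card {u \<in> V. E v u}"

definition is_path :: "'a set \<Rightarrow> ('a \<Rightarrow> 'a \<Rightarrow> bool) \<Rightarrow> 'a list \<Rightarrow> bool" where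
  "is_path V E p \<longleftrightarrow> p \<noteq> [] \<and> distinct p \<and> set p \<subseteq> V
     \<and> (\<forall>i. Suc i < length p \<longrightarrow> E (p ! i) (p ! Suc i))"

definition path_edges :: "'a list \<Rightarrow> 'a set set" where
  "path_edges p = {{p ! i, p ! Suc i} | i. Suc i < length p}"

definition internal_vertices :: "'a list \<Rightarrow> 'a set" where
  "internal_vertices p = {p ! i | i. 0 < i \<and> Suc i < length p}"

definition deg2_path :: "'a set \<Rightarrow> ('a \<Rightarrow> 'a \<Rightarrow> bool) \<Rightarrow> 'a list \<Rightarrow> bool" where
  "deg2_path V E p \<longleftrightarrow> is_path V E p \<and> (\<forall>v \<in> internal_vertices p. degree V E v = 2)"

definition is_ear :: "'a set \<Rightarrow> ('a \<Rightarrow> 'a \<Rightarrow> bool) \<Rightarrow> 'a list \<Rightarrow> bool" where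
  "is_ear V E p \<longleftrightarrow> deg2_path V E p \<and>
     (\<forall>q. deg2_path V E q \<and> set p \<subseteq> set q \<and> path_edges p \<subseteq> path_edges q
          \<longrightarrow> set q = set p \<and> path_edges q = path_edges p)"

definition induced_edges :: "('a \<Rightarrow> 'a \<Rightarrow> bool) \<Rightarrow> 'a set \<Rightarrow> 'a \<Rightarrow> 'a \<Rightarrow> bool" where
  "induced_edges E W u v \<longleftrightarrow> u \<in> W \<and> v \<in> W \<and> E u v"

definition complement_edges :: "'a set \<Rightarrow> ('a \<Rightarrow> 'a \<Rightarrow> bool) \<Rightarrow> 'a \<Rightarrow> 'a \<Rightarrow> bool" where
  "complement_edges V E u v \<longleftrightarrow> u \<in> V \<and> v \<in> V \<and> u \<noteq> v \<and> \<not> E u v"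

definition orthogonal_rep :: "'a set \<Rightarrow> ('a \<Rightarrow> 'a \<Rightarrow> bool) \<Rightarrow> ('a \<Rightarrow> real ^ 'n) \<Rightarrow> bool" where
  "orthogonal_rep V E \<phi> \<longleftrightarrow> (\<forall>v\<in>V. \<phi> v \<noteq> 0) \<and>
     (\<forall>u\<in>V. \<forall>v\<in>V. u \<noteq> v \<longrightarrow> (\<phi> u \<bullet> \<phi> v = 0 \<longleftrightarrow> \<not> E u v))"

definition pairwise_lin_indep :: "'a set \<Rightarrow> ('a \<Rightarrow> real ^ 'n) \<Rightarrow> bool" where
  "pairwise_lin_indep V \<phi> \<longleftrightarrow>
     (\<forall>u\<in>V. \<forall>v\<in>V. u \<noteq> v \<longrightarrow> \<phi> u \<noteq> \<phi> v \<and> independent {\<phi> u, \<phi> v})"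

end

theory Submission imports Defs begin
unbundle cross3_syntax

type_synonym v3 = "real^3"

lemma par_cross: fixes u w :: v3
  assumes "u \<times> w = 0" "w \<noteq> 0" shows "u = ((w \<bullet> u) / (w \<bullet> w)) *\<^sub>R w"
proof -
  have "w \<times> (u \<times> w) = (w \<bullet> w) *\<^sub>R u - (w \<bullet> u) *\<^sub>R w" by (rule Lagrange)
  then have e: "(w \<bullet> w) *\<^sub>R u = (w \<bullet> u) *\<^sub>R w" using assms by simp
  have n: "w \<bullet> w \<noteq> 0" using assms by simp
  have "u = (1 / (w \<bullet> w)) *\<^sub>R ((w \<bullet> w) *\<^sub>R u)" using n by simp
  also have "\<dots> = ((w \<bullet> u) / (w \<bullet> w)) *\<^sub>R w" unfolding e by simp
  finally show ?thesis .
qed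

lemma indep_cross: fixes x y :: v3
  assumes "x \<noteq> y" shows "independent {x, y} \<longleftrightarrow> x \<times> y \<noteq> 0"
proof
  assume i: "independent {x,y}"
  show "x \<times> y \<noteq> 0"
  proof
    assume c: "x \<times> y = 0"
    have x0: "x \<noteq> 0" using i dependent_zero by blast
    have "y \<times> x = 0" using c cross_skew[of y x] by simp
    then have "y = ((x \<bullet> y) / (x \<bullet> x)) *\<^sub>R x" using par_cross x0 by blast
    moreover have "{x,y} - {y} = {x}" using assms by auto
    ultimately have "y \<in> span ({x,y} - {y})" by (metis span_base span_scale singletonI)
    then show False using i dependent_def by blast
  qed
next
  assume c: "x \<times> y \<noteq> 0"
  show "independent {x,y}"
  proof
    assume "dependent {x,y}"
    then obtain a where a: "a \<in> {x,y}" "a \<in> span ({x,y} - {a})" unfolding dependent_def by blast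
    show False
    proof (cases "a = x")
      case True
      have "{x,y} - {x} = {y}" using assms by auto
      then have "x \<in> span {y}" using a True by simp
      then obtain k where "x = k *\<^sub>R y" by (auto simp: span_singleton)
      then show False using c by (simp add: cross_mult_left)
    next
      case False
      then have ay: "a = y" using a by blast
      have "{x,y} - {y} = {x}" using assms by auto
      then have "y \<in> span {x}" using a ay by simp
      then obtain k where "y = k *\<^sub>R x" by (auto simp: span_singleton)
      then show False using c by (simp add: cross_mult_right)
    qed
  qed
qed

lemma par_both: fixes x y :: v3
  assumes "x \<times> v = 0" "y \<times> v = 0" "v \<noteq> 0" shows "x \<times> y = 0"
proof -
  obtain a b where "x = a *\<^sub>R v" "y = b *\<^sub>R v" using par_cross assms by blast
  then show ?thesis by (simp add: cross_mult_left cross_mult_right)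
qed

lemma orth2: fixes x y p w :: v3
  assumes "x \<times> y \<noteq> 0" "p \<bullet> x = 0" "p \<bullet> y = 0" "w \<bullet> x = 0" "w \<bullet> y = 0"
  shows "p \<times> w = 0"
proof -
  have "p \<times> (x \<times> y) = 0" using Lagrange[of p x y] assms by simp
  moreover have "w \<times> (x \<times> y) = 0" using Lagrange[of w x y] assms by simp
  ultimately show ?thesis using par_both assms(1) by blast
qed

lemma lin_comb_zero: fixes a b :: v3
  assumes "a \<times> b \<noteq> 0" "s *\<^sub>R a + t *\<^sub>R b = 0" shows "s = 0 \<and> t = 0"
proof -
  have "(s *\<^sub>R a + t *\<^sub>R b) \<times> b = s *\<^sub>R (a \<times> b)" by (simp add: cross_add_left cross_mult_left)
  then have s: "s = 0" using assms by simp
  have "(s *\<^sub>R a + t *\<^sub>R b) \<times> a = t *\<^sub>R (b \<times> a)" by (simp add: cross_add_left cross_mult_left)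
  moreover have "b \<times> a \<noteq> 0" using assms(1) cross_skew[of b a] by auto
  ultimately have "t = 0" using assms by simp
  with s show ?thesis by simp
qed

lemma plane_basis: fixes p :: v3 assumes "p \<noteq> 0"
  shows "\<exists>e1 e2. e1 \<bullet> p = 0 \<and> e2 \<bullet> p = 0 \<and> e1 \<times> e2 \<noteq> 0"
proof -
  obtain q where q: "p \<times> q \<noteq> 0" using cross_basis_nonzero[OF assms] by blast
  define e1 where "e1 = p \<times> q"
  define e2 where "e2 = p \<times> e1"
  have "e1 \<times> e2 = (e1 \<bullet> e1) *\<^sub>R p - (e1 \<bullet> p) *\<^sub>R e1" unfolding e2_def by (rule Lagrange)
  also have "\<dots> = (e1 \<bullet> e1) *\<^sub>R p" by (simp add: e1_def dot_cross_self inner_commute)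
  finally have "e1 \<times> e2 \<noteq> 0" using q assms by (simp add: e1_def)
  moreover have "e1 \<bullet> p = 0" "e2 \<bullet> p = 0" by (simp_all add: e1_def e2_def dot_cross_self inner_commute)
  ultimately show ?thesis by blast
qed

lemma subsingleton_finite: "(\<And>a b. a \<in> S \<Longrightarrow> b \<in> S \<Longrightarrow> a = b) \<Longrightarrow> finite S"
proof (cases "S = {}")
  case False
  assume h: "\<And>a b. a \<in> S \<Longrightarrow> b \<in> S \<Longrightarrow> a = b"
  from False obtain a where "a \<in> S" by blast
  then have "S \<subseteq> {a}" using h by blast
  then show ?thesis using finite_subset by blast
qed simp

lemma generic_choice: fixes p :: v3
  assumes p: "p \<noteq> 0" and fin: "finite I"
    and Q: "\<And>i x y. i \<in> I \<Longrightarrow> x \<bullet> p = 0 \<Longrightarrow> y \<bullet> p = 0 \<Longrightarrow> x \<times> y \<noteq> 0 \<Longrightarrow> Q i x \<Longrightarrow> Q i y \<Longrightarrow> False"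
  shows "\<exists>x. x \<bullet> p = 0 \<and> x \<noteq> 0 \<and> (\<forall>i\<in>I. \<not> Q i x)"
proof -
  obtain e1 e2 where e: "e1 \<bullet> p = 0" "e2 \<bullet> p = 0" "e1 \<times> e2 \<noteq> 0" using plane_basis[OF p] by blast
  define X where "X t = e1 + t *\<^sub>R e2" for t :: real
  have Xp: "X t \<bullet> p = 0" for t using e by (simp add: X_def inner_add_left)
  have Xc: "X t \<times> X s = (s - t) *\<^sub>R (e1 \<times> e2)" for t s
  proof -
    have "X t \<times> X s = s *\<^sub>R (e1 \<times> e2) + t *\<^sub>R (e2 \<times> e1)"
      by (simp add: X_def cross_add_left cross_add_right cross_mult_left cross_mult_right)
    also have "e2 \<times> e1 = - (e1 \<times> e2)" by (rule cross_skew)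
    finally show ?thesis by (simp add: algebra_simps)
  qed
  have Xcn: "X t \<times> X s \<noteq> 0" if "t \<noteq> s" for t s using Xc e(3) that by simp
  have Xn: "X t \<noteq> 0" for t
  proof
    assume "X t = 0"
    then have "1 *\<^sub>R e1 + t *\<^sub>R e2 = 0" by (simp add: X_def)
    from lin_comb_zero[OF e(3) this] show False by simp
  qed
  define Bad where "Bad = (\<Union>i\<in>I. {t. Q i (X t)})"
  have "finite {t. Q i (X t)}" if "i \<in> I" for i
    by (rule subsingleton_finite) (use Q[OF that Xp Xp Xcn] in blast)
  then have "finite Bad" unfolding Bad_def using fin by blast
  then obtain t where "t \<notin> Bad" using ex_new_if_finite[OF infinite_UNIV_char_0] by blast
  then show ?thesis using Xp Xn unfolding Bad_def by blast
qed

lemma step_choice: fixes p :: v3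
  assumes p: "p \<noteq> 0" and "finite F1" "\<forall>w\<in>F1. p \<times> w \<noteq> 0" "finite F2" "0 \<notin> F2"
  shows "\<exists>x. x \<bullet> p = 0 \<and> x \<noteq> 0 \<and> (\<forall>w\<in>F1. x \<bullet> w \<noteq> 0) \<and> (\<forall>v\<in>F2. x \<times> v \<noteq> 0)"
proof -
  define Q where "Q i x = (case i of Inl w \<Rightarrow> x \<bullet> w = 0 | Inr v \<Rightarrow> x \<times> v = 0)" for i :: "v3 + v3" and x
  have "\<exists>x. x \<bullet> p = 0 \<and> x \<noteq> 0 \<and> (\<forall>i\<in>F1 <+> F2. \<not> Q i x)"
  proof (rule generic_choice[OF p])
    show "finite (F1 <+> F2)" using assms by simp
  next
    fix i x y assume i: "i \<in> F1 <+> F2" and h: "x \<bullet> p = 0" "y \<bullet> p = 0" "x \<times> y \<noteq> 0" "Q i x" "Q i y"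
    show False
    proof (cases i)
      case (Inl w)
      then have "w \<in> F1" using i by auto
      moreover have "p \<times> w = 0"
        using orth2[OF h(3)] h Inl by (simp add: Q_def inner_commute)
      ultimately show False using assms(3) by blast
    next
      case (Inr v)
      then have "v \<in> F2" using i by auto
      then have "v \<noteq> 0" using assms(5) by blast
      then show False using par_both[of x v y] h Inr by (simp add: Q_def)
    qed
  qed
  then obtain x where x: "x \<bullet> p = 0" "x \<noteq> 0" "\<forall>i\<in>F1 <+> F2. \<not> Q i x" by blast
  have "\<forall>w\<in>F1. x \<bullet> w \<noteq> 0"
  proof
    fix w assume "w \<in> F1" then have "Inl w \<in> F1 <+> F2" by auto
    then show "x \<bullet> w \<noteq> 0" using x(3) by (force simp: Q_def)
  qed
  moreover have "\<forall>v\<in>F2. x \<times> v \<noteq> 0"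
  proof
    fix v assume "v \<in> F2" then have "Inr v \<in> F1 <+> F2" by auto
    then show "x \<times> v \<noteq> 0" using x(3) by (force simp: Q_def)
  qed
  ultimately show ?thesis using x by blast
qed

lemma cross_zero_comm: fixes a b :: v3 shows "a \<times> b = 0 \<longleftrightarrow> b \<times> a = 0"
  using cross_skew[of b a] by auto

lemma cross_nz_sym: fixes a b :: v3 shows "a \<times> b \<noteq> 0 \<Longrightarrow> b \<times> a \<noteq> 0"
  using cross_skew[of b a] by auto

lemma L_nz: fixes p c v :: v3
  assumes "p \<bullet> c \<noteq> 0" "c \<times> v \<noteq> 0" shows "p \<times> (c \<times> v) \<noteq> 0"
proof
  assume "p \<times> (c \<times> v) = 0"
  then have "(p \<bullet> v) *\<^sub>R c - (p \<bullet> c) *\<^sub>R v = 0" using Lagrange[of p c v] by simp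
  then have "(p \<bullet> v) *\<^sub>R c + (- (p \<bullet> c)) *\<^sub>R v = 0" by simp
  from lin_comb_zero[OF assms(2) this] show False using assms(1) by simp
qed

definition Inv :: "v3 set \<Rightarrow> v3 \<Rightarrow> v3 \<Rightarrow> (nat \<Rightarrow> v3) \<Rightarrow> nat \<Rightarrow> bool" where
"Inv T A c y k \<longleftrightarrow> y 0 = A \<and>
 (\<forall>i. 1\<le>i \<and> i\<le>k \<longrightarrow> y i \<bullet> y (i-1) = 0) \<and>
 (\<forall>i v. 1\<le>i \<and> i\<le>k \<and> v\<in>T \<and> v\<noteq>A \<longrightarrow> y i \<bullet> v \<noteq> 0) \<and>
 (\<forall>i j. i+2 \<le> j \<and> j \<le> k \<longrightarrow> y i \<bullet> y j \<noteq> 0) \<and>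
 (\<forall>i v. 1\<le>i \<and> i\<le>k \<and> v\<in>T \<longrightarrow> y i \<times> v \<noteq> 0) \<and>
 (\<forall>i j. 1\<le>i \<and> i<j \<and> j\<le>k \<longrightarrow> y i \<times> y j \<noteq> 0) \<and>
 (\<forall>i. i\<le>k \<longrightarrow> y i \<bullet> c \<noteq> 0) \<and>
 (\<forall>i. 1\<le>i \<and> i\<le>k \<longrightarrow> y i \<times> c \<noteq> 0) \<and>
 (\<forall>i v. 1\<le>i \<and> i\<le>k \<and> v\<in>T \<longrightarrow> y i \<bullet> (c \<times> v) \<noteq> 0) \<and>
 (\<forall>i j. 1\<le>j \<and> j<i \<and> i\<le>k \<longrightarrow> y i \<bullet> (c \<times> y j) \<noteq> 0) \<and>
 (\<forall>i. i\<le>k \<longrightarrow> y i \<noteq> 0)"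

lemma chain_exists:
  fixes T :: "v3 set" and A c :: v3
  assumes finT: "finite T" and T0: "0 \<notin> T" and pairT: "\<forall>u\<in>T. \<forall>v\<in>T. u \<noteq> v \<longrightarrow> u \<times> v \<noteq> 0"
    and AT: "A \<in> T" and c0: "c \<noteq> 0" and cA: "A \<bullet> c \<noteq> 0" and cT: "\<forall>v\<in>T. c \<times> v \<noteq> 0"
  shows "\<exists>y. Inv T A c y k"
proof (induction k)
  case 0
  have "A \<noteq> 0" using AT T0 by blast
  then show ?case using cA by (intro exI[of _ "\<lambda>_. A"]) (simp add: Inv_def)
next
  case (Suc k)
  then obtain y where y: "Inv T A c y k" by blast
  note I = y[unfolded Inv_def]
  have y0: "y 0 = A" using I by blast
  have ya: "\<And>i. 1\<le>i \<Longrightarrow> i\<le>k \<Longrightarrow> y i \<bullet> y (i-1) = 0" using I by blast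
  have yb: "\<And>i v. 1\<le>i \<Longrightarrow> i\<le>k \<Longrightarrow> v\<in>T \<Longrightarrow> v\<noteq>A \<Longrightarrow> y i \<bullet> v \<noteq> 0" using I by blast
  have yc: "\<And>i j. i+2 \<le> j \<Longrightarrow> j \<le> k \<Longrightarrow> y i \<bullet> y j \<noteq> 0" using I by blast
  have yd: "\<And>i v. 1\<le>i \<Longrightarrow> i\<le>k \<Longrightarrow> v\<in>T \<Longrightarrow> y i \<times> v \<noteq> 0" using I by blast
  have ye: "\<And>i j. 1\<le>i \<Longrightarrow> i<j \<Longrightarrow> j\<le>k \<Longrightarrow> y i \<times> y j \<noteq> 0" using I by blast
  have yf: "\<And>i. i\<le>k \<Longrightarrow> y i \<bullet> c \<noteq> 0" using I by blast
  have yg: "\<And>i. 1\<le>i \<Longrightarrow> i\<le>k \<Longrightarrow> y i \<times> c \<noteq> 0" using I by blast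
  have yh: "\<And>i v. 1\<le>i \<Longrightarrow> i\<le>k \<Longrightarrow> v\<in>T \<Longrightarrow> y i \<bullet> (c \<times> v) \<noteq> 0" using I by blast
  have yi: "\<And>i j. 1\<le>j \<Longrightarrow> j<i \<Longrightarrow> i\<le>k \<Longrightarrow> y i \<bullet> (c \<times> y j) \<noteq> 0" using I by blast
  have yn: "\<And>i. i\<le>k \<Longrightarrow> y i \<noteq> 0" using I by blast
  define p where "p = y k"
  define F1 where "F1 = (T - {A}) \<union> y ` {..<k} \<union> {c} \<union> (\<lambda>v. c \<times> v) ` T \<union> (\<lambda>j. c \<times> y j) ` {1..k}"
  define F2 where "F2 = T \<union> y ` {1..k} \<union> {c}"
  have pn: "p \<noteq> 0" using yn p_def by simp
  have pc: "p \<bullet> c \<noteq> 0" using yf p_def by simp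
  have F1ok: "\<forall>w\<in>F1. p \<times> w \<noteq> 0"
  proof
    fix w assume w: "w \<in> F1"
    consider "w \<in> T" "w \<noteq> A" | i where "i < k" "w = y i" | "w = c" | v where "v \<in> T" "w = c \<times> v"
      | j where "1 \<le> j" "j \<le> k" "w = c \<times> y j"
      using w unfolding F1_def by auto
    then show "p \<times> w \<noteq> 0"
    proof cases
      case 1 then show ?thesis
        by (cases "k = 0") (use pairT AT y0 yd p_def in auto)
    next
      case (2 i) then show ?thesis
        by (cases "i = 0") (use AT y0 yd ye cross_zero_comm p_def in auto)
    next
      case 3 then show ?thesis
        by (cases "k = 0") (use AT cT y0 yg cross_zero_comm p_def in auto)
    next
      case (4 v) then show ?thesis using L_nz[OF pc] cT by auto
    next
      case (5 j) then show ?thesis using L_nz[OF pc] yg cross_zero_comm by auto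
    qed
  qed
  have F2ok: "0 \<notin> F2" using T0 c0 yn unfolding F2_def by auto
  have "finite F1" "finite F2" using finT unfolding F1_def F2_def by auto
  then obtain x where x: "x \<bullet> p = 0" "x \<noteq> 0" "\<forall>w\<in>F1. x \<bullet> w \<noteq> 0" "\<forall>v\<in>F2. x \<times> v \<noteq> 0"
    using step_choice[OF pn _ F1ok _ F2ok] by blast
  define y' where "y' = y(Suc k := x)"
  have xb: "\<And>v. v\<in>T \<Longrightarrow> v\<noteq>A \<Longrightarrow> x \<bullet> v \<noteq> 0" using x(3) unfolding F1_def by auto
  have xc: "\<And>i. i<k \<Longrightarrow> y i \<bullet> x \<noteq> 0" using x(3) unfolding F1_def by (auto simp: inner_commute)
  have xd: "\<And>v. v\<in>T \<Longrightarrow> x \<times> v \<noteq> 0" using x(4) unfolding F2_def by auto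
  have xe: "\<And>i. 1\<le>i \<Longrightarrow> i\<le>k \<Longrightarrow> y i \<times> x \<noteq> 0" using x(4) cross_zero_comm unfolding F2_def by auto
  have xf: "x \<bullet> c \<noteq> 0" using x(3) unfolding F1_def by auto
  have xg: "x \<times> c \<noteq> 0" using x(4) unfolding F2_def by auto
  have xh: "\<And>v. v\<in>T \<Longrightarrow> x \<bullet> (c \<times> v) \<noteq> 0" using x(3) unfolding F1_def by auto
  have xi: "\<And>j. 1\<le>j \<Longrightarrow> j\<le>k \<Longrightarrow> x \<bullet> (c \<times> y j) \<noteq> 0" using x(3) unfolding F1_def by auto
  have xa: "x \<bullet> y k = 0" using x(1) p_def by simp
  have "Inv T A c y' (Suc k)"
    unfolding Inv_def y'_def
    apply (intro conjI allI impI)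
    subgoal using y0 by simp
    subgoal for i by (cases "i = Suc k") (use xa ya[of i] in auto)
    subgoal for i v by (cases "i = Suc k") (use xb[of v] yb[of i v] in auto)
    subgoal for i j by (cases "j = Suc k") (use xc[of i] yc[of i j] in auto)
    subgoal for i v by (cases "i = Suc k") (use xd[of v] yd[of i v] in auto)
    subgoal for i j by (cases "j = Suc k") (use xe[of i] ye[of i j] in auto)
    subgoal for i by (cases "i = Suc k") (use xf yf[of i] in auto)
    subgoal for i by (cases "i = Suc k") (use xg yg[of i] in auto)
    subgoal for i v by (cases "i = Suc k") (use xh[of v] yh[of i v] in auto)
    subgoal premises h for i j
    proof (cases "i = Suc k")
      case True then show ?thesis using xi[of j] h by auto
    next
      case False
      then have "i \<le> k" "j \<noteq> Suc k" using False h by auto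
      then show ?thesis using yi[of j i] h False by simp
    qed
    subgoal for i by (cases "i = Suc k") (use x(2) yn[of i] in auto)
    done
  then show ?case by blast
qed

lemma z_exists:
  fixes T :: "v3 set" and A B :: v3 and m :: nat
  assumes finT: "finite T" and T0: "0 \<notin> T" and pairT: "\<forall>u\<in>T. \<forall>v\<in>T. u \<noteq> v \<longrightarrow> u \<times> v \<noteq> 0"
    and AT: "A \<in> T" and BT: "B \<in> T" and AB: "A \<noteq> B" and m3: "3 \<le> m"
  shows "\<exists>z. (\<forall>i j. 1\<le>i \<and> i\<le>m \<and> 1\<le>j \<and> j\<le>m \<and> i<j \<longrightarrow> (z i \<bullet> z j = 0 \<longleftrightarrow> j = i+1))
     \<and> (\<forall>i j. 1\<le>i \<and> i\<le>m \<and> 1\<le>j \<and> j\<le>m \<and> i<j \<longrightarrow> z i \<times> z j \<noteq> 0)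
     \<and> (\<forall>i v. 1\<le>i \<and> i\<le>m \<and> v\<in>T \<longrightarrow> z i \<times> v \<noteq> 0)
     \<and> (\<forall>i v. 1\<le>i \<and> i\<le>m \<and> v\<in>T \<longrightarrow> (z i \<bullet> v = 0 \<longleftrightarrow> (i=1 \<and> v=A) \<or> (i=m \<and> v=B)))"
proof -
  have B0: "B \<noteq> 0" using BT T0 by blast
  have all1: "\<forall>w\<in>T - {B}. B \<times> w \<noteq> 0"
  proof
    fix w assume "w \<in> T - {B}"
    then have "w \<in> T" "B \<noteq> w" by auto
    then show "B \<times> w \<noteq> 0" using pairT BT by blast
  qed
  have fin1: "finite (T - {B})" using finT by simp
  have "\<exists>x. x \<bullet> B = 0 \<and> x \<noteq> 0 \<and> (\<forall>w\<in>T - {B}. x \<bullet> w \<noteq> 0) \<and> (\<forall>v\<in>T. x \<times> v \<noteq> 0)"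
    by (rule step_choice[OF B0 fin1 all1 finT T0])
  then obtain c where c: "c \<bullet> B = 0" "c \<noteq> 0" "\<forall>w\<in>T - {B}. c \<bullet> w \<noteq> 0" "\<forall>v\<in>T. c \<times> v \<noteq> 0"
    by blast
  have cv: "c \<bullet> v = 0 \<longleftrightarrow> v = B" if v: "v \<in> T" for v
  proof (cases "v = B")
    case True then show ?thesis using c(1) by simp
  next
    case False then show ?thesis using c(3) v by blast
  qed
  have "c \<bullet> A \<noteq> 0" using cv[OF AT] AB by blast
  then have cA: "A \<bullet> c \<noteq> 0" by (metis inner_commute)
  obtain y where y: "Inv T A c y (m-2)" using chain_exists[OF finT T0 pairT AT c(2) cA c(4), of "m-2"] by blast
  define k where "k = m - 2"
  have yk: "Inv T A c y k" using y by (simp only: k_def)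
  note I = yk[unfolded Inv_def]
  have k1: "1 \<le> k" using m3 k_def by simp
  have mk: "m = k + 2" using m3 k_def by simp
  have y0: "y 0 = A" using I by blast
  have ya: "\<And>i. 1\<le>i \<Longrightarrow> i\<le>k \<Longrightarrow> y i \<bullet> y (i-1) = 0" using I by blast
  have yb: "\<And>i v. 1\<le>i \<Longrightarrow> i\<le>k \<Longrightarrow> v\<in>T \<Longrightarrow> v\<noteq>A \<Longrightarrow> y i \<bullet> v \<noteq> 0" using I by blast
  have yc: "\<And>i j. i+2 \<le> j \<Longrightarrow> j \<le> k \<Longrightarrow> y i \<bullet> y j \<noteq> 0" using I by blast
  have yd: "\<And>i v. 1\<le>i \<Longrightarrow> i\<le>k \<Longrightarrow> v\<in>T \<Longrightarrow> y i \<times> v \<noteq> 0" using I by blast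
  have ye: "\<And>i j. 1\<le>i \<Longrightarrow> i<j \<Longrightarrow> j\<le>k \<Longrightarrow> y i \<times> y j \<noteq> 0" using I by blast
  have yf: "\<And>i. i\<le>k \<Longrightarrow> y i \<bullet> c \<noteq> 0" using I by blast
  have yg: "\<And>i. 1\<le>i \<Longrightarrow> i\<le>k \<Longrightarrow> y i \<times> c \<noteq> 0" using I by blast
  have yh: "\<And>i v. 1\<le>i \<Longrightarrow> i\<le>k \<Longrightarrow> v\<in>T \<Longrightarrow> y i \<bullet> (c \<times> v) \<noteq> 0" using I by blast
  have yi: "\<And>i j. 1\<le>j \<Longrightarrow> j<i \<Longrightarrow> i\<le>k \<Longrightarrow> y i \<bullet> (c \<times> y j) \<noteq> 0" using I by blast
  define d where "d = y k"
  define q where "q = d \<times> c"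
  have dc: "d \<times> c \<noteq> 0" using yg k1 d_def by simp
  have yv: "\<And>i v. 1\<le>i \<Longrightarrow> i\<le>k \<Longrightarrow> v\<in>T \<Longrightarrow> y i \<bullet> v = 0 \<longleftrightarrow> (i = 1 \<and> v = A)"
  proof -
    fix i v assume h: "1\<le>i" "i\<le>k" "v\<in>T"
    show "y i \<bullet> v = 0 \<longleftrightarrow> (i = 1 \<and> v = A)"
    proof (cases "v = A")
      case True
      show ?thesis
      proof (cases "i = 1")
        case True
        then show ?thesis using ya[of 1] k1 y0 \<open>v = A\<close> by simp
      next
        case False
        then have "y 0 \<bullet> y i \<noteq> 0" using yc[of 0 i] h by simp
        then have "y i \<bullet> v \<noteq> 0" using y0 \<open>v = A\<close> by (simp add: inner_commute)
        then show ?thesis using False by simp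
      qed
    next
      case False
      then show ?thesis using yb[of i v] h by simp
    qed
  qed
  have qv: "\<And>v. v \<in> T \<Longrightarrow> q \<bullet> v \<noteq> 0"
  proof -
    fix v assume v: "v \<in> T"
    have "q \<bullet> v = d \<bullet> (c \<times> v)" unfolding q_def using cross_triple[of d c v] by (simp add: inner_commute)
    then show "q \<bullet> v \<noteq> 0" using yh[OF k1 _ v] d_def by simp
  qed
  have qcomb: "\<And>v. q \<times> v = 0 \<Longrightarrow> v \<bullet> c = 0 \<and> v \<bullet> d = 0"
  proof -
    fix v assume "q \<times> v = 0"
    then have "v \<times> q = 0" using cross_zero_comm by blast
    then have "(v \<bullet> c) *\<^sub>R d + (- (v \<bullet> d)) *\<^sub>R c = 0" using Lagrange[of v d c] q_def by simp
    from lin_comb_zero[OF dc this] show "v \<bullet> c = 0 \<and> v \<bullet> d = 0" by simp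
  qed
  have qxv: "\<And>v. v \<in> T \<Longrightarrow> q \<times> v \<noteq> 0"
  proof
    fix v assume v: "v \<in> T" "q \<times> v = 0"
    then have "v \<bullet> c = 0" "v \<bullet> d = 0" using qcomb by auto
    then have "v = B" using cv[OF v(1)] by (simp add: inner_commute)
    then show False using yb[OF k1 _ BT] AB \<open>v \<bullet> d = 0\<close> d_def by (simp add: inner_commute)
  qed
  have qxy: "q \<times> y i \<noteq> 0" if i: "i \<le> k" for i
  proof
    assume "q \<times> y i = 0"
    then have "y i \<bullet> c = 0" using qcomb by blast
    then show False using yf[OF i] by simp
  qed
  have qxc: "q \<times> c \<noteq> 0"
  proof
    assume "q \<times> c = 0"
    then have "c \<bullet> c = 0" using qcomb by blast
    then show False using c(2) by simp
  qed
  have qy: "\<And>i. 1 \<le> i \<Longrightarrow> i < k \<Longrightarrow> y i \<bullet> q \<noteq> 0"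
  proof -
    fix i assume i: "1 \<le> i" "i < k"
    have "y i \<bullet> q = d \<bullet> (c \<times> y i)" unfolding q_def using cross_triple[of d c "y i"] by (simp add: inner_commute)
    then show "y i \<bullet> q \<noteq> 0" using yi[OF i(1) i(2)] d_def by simp
  qed
  have qd: "d \<bullet> q = 0" "q \<bullet> c = 0" unfolding q_def by (simp_all add: dot_cross_self)
  define z where "z i = (if i = m then c else if i = m - 1 then q else y i)" for i
  have zm: "z m = c" and zm1: "z (k+1) = q" and zy: "\<And>i. i \<le> k \<Longrightarrow> z i = y i"
    using mk by (auto simp: z_def)
  have Z1: "\<forall>i j. 1\<le>i \<and> i\<le>m \<and> 1\<le>j \<and> j\<le>m \<and> i<j \<longrightarrow> (z i \<bullet> z j = 0 \<longleftrightarrow> j = i+1)"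
  proof (intro allI impI)
    fix i j assume h: "1\<le>i \<and> i\<le>m \<and> 1\<le>j \<and> j\<le>m \<and> i<j"
    consider "j \<le> k" | "j = k+1" | "j = k+2" using h mk by linarith
    then show "z i \<bullet> z j = 0 \<longleftrightarrow> j = i+1"
    proof cases
      case 1
      then show ?thesis using h zy ya[of j] yc[of i j] by (cases "j = i+1") (auto simp: inner_commute)
    next
      case 2
      then show ?thesis using h zy zm1 qd qy[of i] d_def by (cases "i = k") auto
    next
      case 3
      show ?thesis
      proof (cases "i = k+1")
        case True then show ?thesis using 3 zm1 zm mk qd by simp
      next
        case False
        then have "i \<le> k" using h 3 by simp
        then show ?thesis using 3 zy zm mk yf[of i] by simp
      qed
    qed
  qed
  have Z2: "\<forall>i j. 1\<le>i \<and> i\<le>m \<and> 1\<le>j \<and> j\<le>m \<and> i<j \<longrightarrow> z i \<times> z j \<noteq> 0"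
  proof (intro allI impI)
    fix i j assume h: "1\<le>i \<and> i\<le>m \<and> 1\<le>j \<and> j\<le>m \<and> i<j"
    consider "j \<le> k" | "j = k+1" | "j = k+2" using h mk by linarith
    then show "z i \<times> z j \<noteq> 0"
    proof cases
      case 1
      then show ?thesis using h zy ye by auto
    next
      case 2
      then show ?thesis using h zy zm1 qxy cross_zero_comm by auto
    next
      case 3
      show ?thesis
      proof (cases "i = k+1")
        case True then show ?thesis using 3 zm1 zm mk qxc by simp
      next
        case False
        then have "i \<le> k" using h 3 by simp
        then show ?thesis using 3 zy zm mk yg[of i] h by simp
      qed
    qed
  qed
  have Z3: "\<forall>i v. 1\<le>i \<and> i\<le>m \<and> v\<in>T \<longrightarrow> z i \<times> v \<noteq> 0 \<and> (z i \<bullet> v = 0 \<longleftrightarrow> (i=1 \<and> v=A) \<or> (i=m \<and> v=B))"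
  proof (intro allI impI)
    fix i v assume h: "1\<le>i \<and> i\<le>m \<and> v\<in>T"
    consider "i \<le> k" | "i = k+1" | "i = k+2" using h mk by linarith
    then show "z i \<times> v \<noteq> 0 \<and> (z i \<bullet> v = 0 \<longleftrightarrow> (i=1 \<and> v=A) \<or> (i=m \<and> v=B))"
    proof cases
      case 1
      then show ?thesis using h zy yd yv mk by auto
    next
      case 2
      then show ?thesis using h zm1 qxv qv mk k1 by auto
    next
      case 3
      then show ?thesis using h zm mk c(4) cv k1 by auto
    qed
  qed
  show ?thesis using Z1 Z2 Z3 by blast
qed

theorem proposition4p4:
  fixes V :: "'a set" and E :: "'a \<Rightarrow> 'a \<Rightarrow> bool" and P :: "'a list"
  assumes "simple_graph V E"
    and "connected_graph V E"
    and "is_ear V E P"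
    and "length P \<ge> 5"
  defines "W \<equiv> V - internal_vertices P"
  assumes "\<exists>\<psi> :: 'a \<Rightarrow> real ^ 3.
             orthogonal_rep W (complement_edges W (induced_edges E W)) \<psi> \<and> pairwise_lin_indep W \<psi>"
  shows "\<exists>\<phi> :: 'a \<Rightarrow> real ^ 3.
           orthogonal_rep V (complement_edges V E) \<phi> \<and> pairwise_lin_indep V \<phi>"
proof -
  have finV: "finite V" and Esym: "\<And>u v. E u v \<Longrightarrow> E v u" and EV: "\<And>u v. E u v \<Longrightarrow> u \<in> V \<and> v \<in> V"
    using assms(1) unfolding simple_graph_def by blast+
  have path: "is_path V E P" and deg: "\<And>v. v \<in> internal_vertices P \<Longrightarrow> degree V E v = 2"
    using assms(3) unfolding is_ear_def deg2_path_def by blast+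
  have distP: "distinct P" and setP: "set P \<subseteq> V" and Ep: "\<And>i. Suc i < length P \<Longrightarrow> E (P ! i) (P ! Suc i)"
    using path unfolding is_path_def by blast+
  define n where "n = length P"
  define m where "m = n - 2"
  have m3: "3 \<le> m" and nm: "n = m + 2" using assms(4) by (auto simp: m_def n_def)
  have PV: "\<And>i. i < n \<Longrightarrow> P ! i \<in> V" using setP n_def by (metis nth_mem subsetD)
  have Pinj: "\<And>i j. i < n \<Longrightarrow> j < n \<Longrightarrow> P ! i = P ! j \<longleftrightarrow> i = j"
    using distP n_def by (simp add: nth_eq_iff_index_eq)
  have intv: "internal_vertices P = {P ! i | i. 1 \<le> i \<and> i \<le> m}"
    unfolding internal_vertices_def using nm n_def by (auto; force)
  have PW: "\<And>j. j < n \<Longrightarrow> P ! j \<in> W \<longleftrightarrow> j = 0 \<or> j = m + 1"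
  proof -
    fix j assume j: "j < n"
    have "P ! j \<in> internal_vertices P \<longleftrightarrow> 1 \<le> j \<and> j \<le> m"
      unfolding intv using j Pinj nm by (auto; metis Suc_leI le_less_trans less_add_Suc1 not_less_eq_eq add_2_eq_Suc')
    then show "P ! j \<in> W \<longleftrightarrow> j = 0 \<or> j = m + 1" unfolding W_def using PV[OF j] j nm by auto
  qed
  have Vcases: "\<And>v. v \<in> V \<Longrightarrow> v \<in> W \<or> (\<exists>i. 1 \<le> i \<and> i \<le> m \<and> v = P ! i)"
    unfolding W_def intv by blast
  have nbr: "\<And>i u. 1 \<le> i \<Longrightarrow> i \<le> m \<Longrightarrow> E (P ! i) u \<longleftrightarrow> u = P ! (i - 1) \<or> u = P ! (i + 1)"
  proof -
    fix i u assume i: "1 \<le> i" "i \<le> m"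
    define S where "S = {u \<in> V. E (P ! i) u}"
    have "P ! i \<in> internal_vertices P" unfolding intv using i by blast
    then have cS: "card S = 2" using deg unfolding degree_def S_def by simp
    have "E (P ! (i - 1)) (P ! i)" using Ep[of "i - 1"] i nm n_def by simp
    then have e1: "E (P ! i) (P ! (i - 1))" by (rule Esym)
    have e2: "E (P ! i) (P ! (i + 1))" using Ep[of i] i nm n_def by simp
    have sub: "{P ! (i - 1), P ! (i + 1)} \<subseteq> S" unfolding S_def using e1 e2 EV by blast
    have "P ! (i - 1) \<noteq> P ! (i + 1)" using Pinj i nm by simp
    then have "card {P ! (i - 1), P ! (i + 1)} = 2" by simp
    moreover have "finite S" using finV S_def by simp
    ultimately have "{P ! (i - 1), P ! (i + 1)} = S" using sub cS by (metis card_subset_eq)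
    then show "E (P ! i) u \<longleftrightarrow> u = P ! (i - 1) \<or> u = P ! (i + 1)" unfolding S_def using EV by blast
  qed
  obtain \<psi> :: "'a \<Rightarrow> real^3" where psi: "orthogonal_rep W (complement_edges W (induced_edges E W)) \<psi>"
      "pairwise_lin_indep W \<psi>" using assms(6) by blast
  have \<psi>0: "\<And>u. u \<in> W \<Longrightarrow> \<psi> u \<noteq> 0" using psi(1) unfolding orthogonal_rep_def by blast
  have \<psi>E: "\<And>u v. u \<in> W \<Longrightarrow> v \<in> W \<Longrightarrow> u \<noteq> v \<Longrightarrow> \<psi> u \<bullet> \<psi> v = 0 \<longleftrightarrow> E u v"
    using psi(1) unfolding orthogonal_rep_def complement_edges_def induced_edges_def by auto
  have \<psi>c: "\<And>u v. u \<in> W \<Longrightarrow> v \<in> W \<Longrightarrow> u \<noteq> v \<Longrightarrow> \<psi> u \<times> \<psi> v \<noteq> 0"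
    using psi(2) indep_cross unfolding pairwise_lin_indep_def by blast
  have \<psi>inj: "\<And>u v. u \<in> W \<Longrightarrow> v \<in> W \<Longrightarrow> \<psi> u = \<psi> v \<longleftrightarrow> u = v"
    using \<psi>c by (metis cross_refl)
  define T where "T = \<psi> ` W"
  define a where "a = P ! 0"
  define b where "b = P ! (m + 1)"
  have aW: "a \<in> W" and bW: "b \<in> W" using PW nm unfolding a_def b_def by auto
  have ab: "a \<noteq> b" using Pinj nm unfolding a_def b_def by simp
  have finT: "finite T" unfolding T_def W_def using finV by simp
  have T0: "0 \<notin> T" unfolding T_def using \<psi>0 by auto
  have pairT: "\<forall>u\<in>T. \<forall>v\<in>T. u \<noteq> v \<longrightarrow> u \<times> v \<noteq> 0" unfolding T_def using \<psi>c by auto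
  obtain z where Z1: "\<forall>i j. 1\<le>i \<and> i\<le>m \<and> 1\<le>j \<and> j\<le>m \<and> i<j \<longrightarrow> (z i \<bullet> z j = 0 \<longleftrightarrow> j = i+1)"
     and Z2: "\<forall>i j. 1\<le>i \<and> i\<le>m \<and> 1\<le>j \<and> j\<le>m \<and> i<j \<longrightarrow> z i \<times> z j \<noteq> 0"
     and Z3: "\<forall>i v. 1\<le>i \<and> i\<le>m \<and> v\<in>T \<longrightarrow> z i \<times> v \<noteq> 0"
     and Z4: "\<forall>i v. 1\<le>i \<and> i\<le>m \<and> v\<in>T \<longrightarrow> (z i \<bullet> v = 0 \<longleftrightarrow> (i=1 \<and> v=\<psi> a) \<or> (i=m \<and> v=\<psi> b))"
    using z_exists[OF finT T0 pairT, of "\<psi> a" "\<psi> b" m] aW bW ab \<psi>inj m3 unfolding T_def by blast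
  have IW: "\<And>i v. 1 \<le> i \<Longrightarrow> i \<le> m \<Longrightarrow> v \<in> W \<Longrightarrow> (z i \<bullet> \<psi> v = 0 \<longleftrightarrow> E (P ! i) v) \<and> z i \<times> \<psi> v \<noteq> 0"
  proof -
    fix i v assume i: "1 \<le> i" "i \<le> m" and v: "v \<in> W"
    have c: "z i \<times> \<psi> v \<noteq> 0" using Z3 i v T_def by blast
    have "z i \<bullet> \<psi> v = 0 \<longleftrightarrow> (i=1 \<and> v=a) \<or> (i=m \<and> v=b)"
      using Z4 i v aW bW \<psi>inj T_def by auto
    also have "\<dots> \<longleftrightarrow> v = P ! (i - 1) \<or> v = P ! (i + 1)"
    proof -
      have p1: "P ! (i - 1) \<in> W \<longleftrightarrow> i - 1 = 0 \<or> i - 1 = m + 1" using PW[of "i - 1"] nm i by simp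
      have "v = P ! (i - 1) \<longleftrightarrow> i = 1 \<and> v = a"
      proof (cases "i = 1")
        case False then have "P ! (i - 1) \<notin> W" using p1 i by auto
        then show ?thesis using v False by auto
      qed (simp add: a_def)
      moreover have "v = P ! (i + 1) \<longleftrightarrow> i = m \<and> v = b"
        using PW[of "i + 1"] v i nm b_def by (cases "i = m") auto
      ultimately show ?thesis by blast
    qed
    also have "\<dots> \<longleftrightarrow> E (P ! i) v" using nbr i by blast
    finally show "(z i \<bullet> \<psi> v = 0 \<longleftrightarrow> E (P ! i) v) \<and> z i \<times> \<psi> v \<noteq> 0" using c by blast
  qed
  have II: "\<And>i j. 1 \<le> i \<Longrightarrow> i \<le> m \<Longrightarrow> 1 \<le> j \<Longrightarrow> j \<le> m \<Longrightarrow> i \<noteq> j \<Longrightarrow>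
      (z i \<bullet> z j = 0 \<longleftrightarrow> E (P ! i) (P ! j)) \<and> z i \<times> z j \<noteq> 0"
  proof -
    fix i j assume h: "1 \<le> i" "i \<le> m" "1 \<le> j" "j \<le> m" "i \<noteq> j"
    have "z i \<bullet> z j = 0 \<longleftrightarrow> j = i + 1 \<or> i = j + 1"
    proof (cases "i < j")
      case True then show ?thesis using Z1 h by auto
    next
      case False then have "j < i" using h by simp
      then have "z j \<bullet> z i = 0 \<longleftrightarrow> i = j + 1" using Z1 h by blast
      then show ?thesis using \<open>j < i\<close> by (auto simp: inner_commute)
    qed
    also have "\<dots> \<longleftrightarrow> P ! j = P ! (i - 1) \<or> P ! j = P ! (i + 1)"
      using Pinj[of j "i - 1"] Pinj[of j "i + 1"] h nm by auto
    also have "\<dots> \<longleftrightarrow> E (P ! i) (P ! j)" using nbr h by blast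
    finally have eq: "z i \<bullet> z j = 0 \<longleftrightarrow> E (P ! i) (P ! j)" .
    have "z i \<times> z j \<noteq> 0"
    proof (cases "i < j")
      case True then show ?thesis using Z2 h by blast
    next
      case False then have "j < i" using h by simp
      then have "z j \<times> z i \<noteq> 0" using Z2 h by blast
      then show ?thesis using cross_zero_comm by blast
    qed
    then show "(z i \<bullet> z j = 0 \<longleftrightarrow> E (P ! i) (P ! j)) \<and> z i \<times> z j \<noteq> 0" using eq by blast
  qed
  define idx where "idx v = (THE i. i < n \<and> P ! i = v)" for v
  have idxP: "\<And>i. i < n \<Longrightarrow> idx (P ! i) = i"
    unfolding idx_def using Pinj by (intro the_equality) auto
  define \<phi> where "\<phi> v = (if v \<in> W then \<psi> v else z (idx v))" for v
  have \<phi>W: "\<And>v. v \<in> W \<Longrightarrow> \<phi> v = \<psi> v" by (simp add: \<phi>_def)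
  have \<phi>I: "\<And>i. 1 \<le> i \<Longrightarrow> i \<le> m \<Longrightarrow> \<phi> (P ! i) = z i"
    using PW idxP nm by (auto simp: \<phi>_def)
  have key: "\<And>u v. u \<in> V \<Longrightarrow> v \<in> V \<Longrightarrow> u \<noteq> v \<Longrightarrow> (\<phi> u \<bullet> \<phi> v = 0 \<longleftrightarrow> E u v) \<and> \<phi> u \<times> \<phi> v \<noteq> 0"
  proof -
    fix u v assume u: "u \<in> V" and v: "v \<in> V" and uv: "u \<noteq> v"
    show "(\<phi> u \<bullet> \<phi> v = 0 \<longleftrightarrow> E u v) \<and> \<phi> u \<times> \<phi> v \<noteq> 0"
    proof (cases "u \<in> W")
      case uW: True
      show ?thesis
      proof (cases "v \<in> W")
        case True then show ?thesis using uW \<phi>W \<psi>E \<psi>c uv by simp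
      next
        case False
        then obtain j where j: "1 \<le> j" "j \<le> m" "v = P ! j" using Vcases v by blast
        have "E u v \<longleftrightarrow> E v u" using Esym by blast
        then show ?thesis using IW[OF j(1,2) uW] \<phi>W[OF uW] \<phi>I[OF j(1,2)] cross_zero_comm j(3)
          by (auto simp: inner_commute)
      qed
    next
      case uI: False
      then obtain i where i: "1 \<le> i" "i \<le> m" "u = P ! i" using Vcases u by blast
      show ?thesis
      proof (cases "v \<in> W")
        case True then show ?thesis using IW[OF i(1,2) True] \<phi>W[OF True] \<phi>I[OF i(1,2)] i(3) by simp
      next
        case False
        then obtain j where j: "1 \<le> j" "j \<le> m" "v = P ! j" using Vcases v by blast
        then have "i \<noteq> j" using i uv by blast
        then show ?thesis using II[OF i(1,2) j(1,2)] \<phi>I[OF i(1,2)] \<phi>I[OF j(1,2)] i(3) j(3) by simp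
      qed
    qed
  qed
  have nz: "\<And>v. v \<in> V \<Longrightarrow> \<phi> v \<noteq> 0"
  proof -
    fix v assume v: "v \<in> V"
    show "\<phi> v \<noteq> 0"
    proof (cases "v \<in> W")
      case True then show ?thesis using \<psi>0 \<phi>W by simp
    next
      case False
      then obtain j where j: "1 \<le> j" "j \<le> m" "v = P ! j" using Vcases v by blast
      have "z j \<times> \<psi> a \<noteq> 0" using IW[OF j(1,2) aW] by blast
      then show ?thesis using \<phi>I[OF j(1,2)] j(3) by auto
    qed
  qed
  have "orthogonal_rep V (complement_edges V E) \<phi>"
    unfolding orthogonal_rep_def complement_edges_def using key nz by auto
  moreover have "pairwise_lin_indep V \<phi>"
    unfolding pairwise_lin_indep_def using key indep_cross by (metis cross_refl)
  ultimately show ?thesis by blast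
qed

end
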